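(* Let $v\in L_2(-\infty,+\infty)$, $\alpha\in\mathbb{R}$, and let $A(v,\alpha)$ be the self-adjoint operator in $L_2$ acting by $A(v,\alpha)\psi(x)=i\psi'(x)+v(x)\big[\tfrac12\psi(-0)+\tfrac{e^{-i\alpha}}{2}\psi(+0)\big]$, $x\ne0$, on the domain of all $\psi\in W_2^1(\Omega)$ with $i\psi(-0)-ie^{-i\alpha}\psi(+0)=\langle\psi,v\rangle$. Then a real number $\lambda$ is an eigenvalue of $A(v,\alpha)$ if and only if the function $$\psi_\lambda(x)=\theta(x)\Big(-i\int_x^\infty e^{-i\lambda(x-y)}v(y)\,dy\Big)+\theta(-x)\Big(i\int_{-\infty}^x e^{-i\lambda(x-y)}v(y)\,dy\Big)$$ belongs to $L_2(\mathbb{R})$ and satisfies $$\psi_\lambda(-0)+e^{-i\alpha}\psi_\lambda(+0)=2,\qquad \psi_\lambda(-0)-e^{-i\alpha}\psi_\lambda(+0)=-i\langle\psi_\lambda,v\rangle.$$ If these conditions hold, then $A(v,\alpha)\psi_\lambda=\lambda\psi_\lambda$. Every eigenvalue has multiplicity one.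
   Context: $\Omega=\mathbb{R}\setminus\{0\}$; $W_2^1(\Omega)$ consists of functions whose restrictions to each half-line belong to $W_2^1$ of that half-line; $\psi(\pm0)$ are one-sided limits at $0$; $\theta$ is the Heaviside function; $\langle f,g\rangle=\int f\bar g\,dx$. *)

theory Defs
  imports "HOL-Analysis.Analysis"
begin

definition sq_int :: "(real \<Rightarrow> complex) \<Rightarrow> bool" where
  "sq_int f \<longleftrightarrow> f \<in> borel_measurable lebesgue \<and>
     integrable lebesgue (\<lambda>x. (cmod (f x))\<^sup>2)"

definition l2_inner :: "(real \<Rightarrow> complex) \<Rightarrow> (real \<Rightarrow> complex) \<Rightarrow> complex" where
  "l2_inner f g = (LINT x|lebesgue. f x * cnj (g x))"

definition lim_m0 :: "(real \<Rightarrow> complex) \<Rightarrow> complex" where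
  "lim_m0 f = Lim (at_left 0) f"

definition lim_p0 :: "(real \<Rightarrow> complex) \<Rightarrow> complex" where
  "lim_p0 f = Lim (at_right 0) f"

text \<open>psi belongs to W_2^1(Omega) with derivative dpsi (on each half-line psi is
  the absolutely continuous representative, psi and dpsi are square integrable).\<close>
definition W21_Omega :: "(real \<Rightarrow> complex) \<Rightarrow> (real \<Rightarrow> complex) \<Rightarrow> bool" where
  "W21_Omega psi dpsi \<longleftrightarrow> sq_int psi \<and> sq_int dpsi \<and>
     (\<forall>x y. 0 < x \<longrightarrow> x \<le> y \<longrightarrow> psi y - psi x = (LINT t:{x..y}|lebesgue. dpsi t)) \<and>
     (\<forall>x y. x \<le> y \<longrightarrow> y < 0 \<longrightarrow> psi y - psi x = (LINT t:{x..y}|lebesgue. dpsi t))"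

definition in_dom :: "(real \<Rightarrow> complex) \<Rightarrow> real \<Rightarrow> (real \<Rightarrow> complex) \<Rightarrow> (real \<Rightarrow> complex) \<Rightarrow> bool" where
  "in_dom v \<alpha> psi dpsi \<longleftrightarrow> W21_Omega psi dpsi \<and>
     \<i> * lim_m0 psi - \<i> * exp (- \<i> * of_real \<alpha>) * lim_p0 psi = l2_inner psi v"

definition A_op :: "(real \<Rightarrow> complex) \<Rightarrow> real \<Rightarrow> (real \<Rightarrow> complex) \<Rightarrow> (real \<Rightarrow> complex) \<Rightarrow> real \<Rightarrow> complex" where
  "A_op v \<alpha> psi dpsi x = \<i> * dpsi x +
     v x * (lim_m0 psi / 2 + exp (- \<i> * of_real \<alpha>) / 2 * lim_p0 psi)"

definition eigenpair :: "(real \<Rightarrow> complex) \<Rightarrow> real \<Rightarrow> real \<Rightarrow> (real \<Rightarrow> complex) \<Rightarrow> (real \<Rightarrow> complex) \<Rightarrow> bool" where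
  "eigenpair v \<alpha> lam psi dpsi \<longleftrightarrow> in_dom v \<alpha> psi dpsi \<and>
     (AE x in lebesgue. A_op v \<alpha> psi dpsi x = of_real lam * psi x)"

definition is_eigenvalue :: "(real \<Rightarrow> complex) \<Rightarrow> real \<Rightarrow> real \<Rightarrow> bool" where
  "is_eigenvalue v \<alpha> lam \<longleftrightarrow>
     (\<exists>psi dpsi. eigenpair v \<alpha> lam psi dpsi \<and> \<not> (AE x in lebesgue. psi x = 0))"

definition kern :: "(real \<Rightarrow> complex) \<Rightarrow> real \<Rightarrow> real \<Rightarrow> real \<Rightarrow> complex" where
  "kern v lam x y = exp (- \<i> * of_real lam * of_real (x - y)) * v y"

definition psi_lam_exists :: "(real \<Rightarrow> complex) \<Rightarrow> real \<Rightarrow> bool" where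
  "psi_lam_exists v lam \<longleftrightarrow>
     (\<forall>x>0. \<exists>l. ((\<lambda>R. LINT y:{x..R}|lebesgue. kern v lam x y) \<longlongrightarrow> l) at_top) \<and>
     (\<forall>x<0. \<exists>l. ((\<lambda>R. LINT y:{R..x}|lebesgue. kern v lam x y) \<longlongrightarrow> l) at_bot)"

definition psi_lam :: "(real \<Rightarrow> complex) \<Rightarrow> real \<Rightarrow> real \<Rightarrow> complex" where
  "psi_lam v lam x =
     (if x > 0 then - \<i> * Lim at_top (\<lambda>R. LINT y:{x..R}|lebesgue. kern v lam x y)
      else if x < 0 then \<i> * Lim at_bot (\<lambda>R. LINT y:{R..x}|lebesgue. kern v lam x y)
      else 0)"

definition psi_cond :: "(real \<Rightarrow> complex) \<Rightarrow> real \<Rightarrow> real \<Rightarrow> bool" where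
  "psi_cond v \<alpha> lam \<longleftrightarrow> psi_lam_exists v lam \<and> sq_int (psi_lam v lam) \<and>
     lim_m0 (psi_lam v lam) + exp (- \<i> * of_real \<alpha>) * lim_p0 (psi_lam v lam) = 2 \<and>
     lim_m0 (psi_lam v lam) - exp (- \<i> * of_real \<alpha>) * lim_p0 (psi_lam v lam)
       = - \<i> * l2_inner (psi_lam v lam) v"

end

theory Submission
  imports Defs
begin

lemma sigma_finite_lebesgue: "sigma_finite_measure (lebesgue :: real measure)"
proof
  show "\<exists>A. countable A \<and> A \<subseteq> sets (lebesgue::real measure) \<and> \<Union> A = space lebesgue \<and> (\<forall>a\<in>A. emeasure lebesgue a \<noteq> \<infinity>)"
  proof (intro exI conjI)
    show "countable (range (\<lambda>n::nat. {-real n..real n}))" by simp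
    show "range (\<lambda>n::nat. {-real n..real n}) \<subseteq> sets lebesgue" by auto
    show "\<Union> (range (\<lambda>n::nat. {-real n..real n})) = space lebesgue"
    proof -
      have "x \<in> \<Union> (range (\<lambda>n::nat. {-real n..real n}))" for x :: real
      proof -
        obtain n :: nat where "\<bar>x\<bar> \<le> real n" using real_arch_simple by blast
        then show ?thesis by (intro UN_I[of n]) auto
      qed
      then show ?thesis by auto
    qed
    show "\<forall>a\<in>range (\<lambda>n::nat. {-real n..real n}). emeasure lebesgue a \<noteq> \<infinity>" by auto
  qed
qed

interpretation leb_pair: pair_sigma_finite "lebesgue :: real measure" "lebesgue :: real measure"
  unfolding pair_sigma_finite_def using sigma_finite_lebesgue by blast

lemma fst_leb[measurable]: "(\<lambda>p::real\<times>real. fst p) \<in> borel_measurable (lebesgue \<Otimes>\<^sub>M lebesgue)"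
proof -
  have "(\<lambda>p::real\<times>real. id (fst p)) \<in> borel_measurable (lebesgue \<Otimes>\<^sub>M lebesgue)"
    by (rule measurable_compose[OF measurable_fst id_borel_measurable_lebesgue])
  then show ?thesis by simp
qed

lemma snd_leb[measurable]: "(\<lambda>p::real\<times>real. snd p) \<in> borel_measurable (lebesgue \<Otimes>\<^sub>M lebesgue)"
proof -
  have "(\<lambda>p::real\<times>real. id (snd p)) \<in> borel_measurable (lebesgue \<Otimes>\<^sub>M lebesgue)"
    by (rule measurable_compose[OF measurable_snd id_borel_measurable_lebesgue])
  then show ?thesis by simp
qed

lemma fubini_tri:
  fixes f h :: "real \<Rightarrow> complex"
  assumes f: "set_integrable lebesgue {a..b} f" and hm[measurable]: "h \<in> borel_measurable lebesgue"
    and hB: "\<And>s. norm (h s) \<le> B"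
  shows "set_integrable lebesgue {a..b} (\<lambda>s. h s * (LINT t:{a..s}|lebesgue. f t))"
    and "(LINT s:{a..b}|lebesgue. h s * (LINT t:{a..s}|lebesgue. f t))
         = (LINT t:{a..b}|lebesgue. f t * (LINT s:{t..b}|lebesgue. h s))"
proof -
  have B0: "0 \<le> B" using hB[of 0] norm_ge_zero order_trans by blast
  define F where "F t = indicator {a..b} t *\<^sub>R f t" for t
  have Fm[measurable]: "F \<in> borel_measurable lebesgue" and Fi: "integrable lebesgue F"
    using f by (auto simp: set_integrable_def F_def[abs_def] borel_measurable_integrable)
  define k where "k s t = (if a \<le> t \<and> t \<le> s \<and> s \<le> b then h s * F t else 0)" for s t
  have km: "case_prod k \<in> borel_measurable (lebesgue \<Otimes>\<^sub>M lebesgue)" unfolding k_def by measurable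
  define G where "G s t = indicator {a..b} s * (B * norm (F t))" for s t :: real
  have Gi: "integrable (lebesgue \<Otimes>\<^sub>M lebesgue) (case_prod G)"
  proof (rule leb_pair.Fubini_integrable)
    show "case_prod G \<in> borel_measurable (lebesgue \<Otimes>\<^sub>M lebesgue)" unfolding G_def by measurable
    have "(\<lambda>s. \<integral>t. norm (case_prod G (s,t)) \<partial>lebesgue) = (\<lambda>s. indicator {a..b} s * (B * (\<integral>t. norm (F t) \<partial>lebesgue)))"
      using B0 by (auto simp: G_def fun_eq_iff abs_mult indicator_def)
    moreover have "integrable lebesgue (\<lambda>s. indicator {a..b} s * (B * (\<integral>t. norm (F t) \<partial>lebesgue)))"
      by (intro integrable_mult_left integrable_real_indicator) (auto simp: emeasure_lborel_Icc_eq)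
    ultimately show "integrable lebesgue (\<lambda>s. \<integral>t. norm (case_prod G (s,t)) \<partial>lebesgue)" by simp
    show "AE s in lebesgue. integrable lebesgue (\<lambda>t. case_prod G (s,t))"
      unfolding G_def using Fi by (auto intro!: integrable_mult_right)
  qed
  have ki: "integrable (lebesgue \<Otimes>\<^sub>M lebesgue) (case_prod k)"
  proof (rule Bochner_Integration.integrable_bound[OF Gi km], rule AE_I2)
    fix p :: "real \<times> real"
    obtain s t where p: "p = (s,t)" by (cases p)
    have "norm (k s t) \<le> norm (G s t)"
      using B0 hB[of s] by (auto simp: k_def G_def norm_mult intro!: mult_right_mono)
    then show "norm (case_prod k p) \<le> norm (case_prod G p)" by (simp add: p)
  qed
  have in1: "(\<integral>t. k s t \<partial>lebesgue) = indicator {a..b} s *\<^sub>R (h s * (LINT t:{a..s}|lebesgue. f t))" for s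
  proof (cases "a \<le> s \<and> s \<le> b")
    case True
    then have "(\<lambda>t. k s t) = (\<lambda>t. h s * (indicator {a..s} t *\<^sub>R f t))"
      by (auto simp: k_def F_def fun_eq_iff indicator_def)
    moreover have "(\<integral>t. h s * (indicator {a..s} t *\<^sub>R f t) \<partial>lebesgue) = h s * (\<integral>t. indicator {a..s} t *\<^sub>R f t \<partial>lebesgue)"
      by (rule integral_mult_right_zero)
    ultimately show ?thesis using True by (simp add: set_lebesgue_integral_def)
  next
    case False
    then have "(\<lambda>t. k s t) = (\<lambda>t. 0)" by (auto simp: k_def fun_eq_iff)
    then show ?thesis using False by simp
  qed
  have in2: "(\<integral>s. k s t \<partial>lebesgue) = indicator {a..b} t *\<^sub>R (f t * (LINT s:{t..b}|lebesgue. h s))" for t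
  proof (cases "a \<le> t \<and> t \<le> b")
    case True
    then have "(\<lambda>s. k s t) = (\<lambda>s. (indicator {t..b} s *\<^sub>R h s) * f t)"
      by (auto simp: k_def F_def fun_eq_iff indicator_def)
    moreover have "(\<integral>s. (indicator {t..b} s *\<^sub>R h s) * f t \<partial>lebesgue) = (\<integral>s. indicator {t..b} s *\<^sub>R h s \<partial>lebesgue) * f t"
      by (rule integral_mult_left_zero)
    ultimately show ?thesis using True by (simp add: set_lebesgue_integral_def)
  next
    case False
    then have "(\<lambda>s. k s t) = (\<lambda>s. 0)" by (auto simp: k_def fun_eq_iff F_def)
    then show ?thesis using False by simp
  qed
  have "integrable lebesgue (\<lambda>s. \<integral>t. case_prod k (s,t) \<partial>lebesgue)"
    by (rule leb_pair.integrable_fst'[OF ki])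
  then show "set_integrable lebesgue {a..b} (\<lambda>s. h s * (LINT t:{a..s}|lebesgue. f t))"
    by (simp add: in1 set_integrable_def)
  have "(\<integral>t. (\<integral>s. k s t \<partial>lebesgue) \<partial>lebesgue) = (\<integral>s. (\<integral>t. k s t \<partial>lebesgue) \<partial>lebesgue)"
    by (rule leb_pair.Fubini_integral) (use ki in simp)
  then show "(LINT s:{a..b}|lebesgue. h s * (LINT t:{a..s}|lebesgue. f t))
         = (LINT t:{a..b}|lebesgue. f t * (LINT s:{t..b}|lebesgue. h s))"
    by (simp add: in1 in2 set_lebesgue_integral_def)
qed

definition E :: "real \<Rightarrow> real \<Rightarrow> complex" where
  "E \<mu> t = exp (\<i> * of_real (\<mu> * t))"

lemma norm_E[simp]: "norm (E \<mu> t) = 1"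
  unfolding E_def by (simp add: norm_exp_i_times)

lemma E_nz[simp]: "E \<mu> t \<noteq> 0"
  unfolding E_def by simp

lemma cont_E: "continuous_on S (E \<mu>)"
  unfolding E_def by (intro continuous_intros)

lemma E_meas[measurable]: "E \<mu> \<in> borel_measurable lebesgue"
proof -
  have "E \<mu> \<in> borel_measurable borel" by (rule borel_measurable_continuous_onI[OF cont_E])
  from measurable_compose[OF id_borel_measurable_lebesgue this] show ?thesis by (simp add: o_def)
qed

lemma E_deriv: "(E \<mu> has_vector_derivative (\<i> * of_real \<mu> * E \<mu> t)) (at t within S)"
proof -
  have "((\<lambda>z. exp (\<i> * of_real \<mu> * z)) has_field_derivative exp (\<i> * of_real \<mu> * of_real t) * (\<i> * of_real \<mu>)) (at (of_real t))"
    by (auto intro!: derivative_eq_intros)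
  from has_vector_derivative_real_field[OF this, of S]
  show ?thesis by (simp add: E_def[abs_def] mult.assoc mult.commute mult.left_commute)
qed

lemma set_integrable_bdd_mult:
  fixes f g :: "real \<Rightarrow> complex"
  assumes f: "set_integrable lebesgue S f" and g[measurable]: "g \<in> borel_measurable lebesgue"
    and B: "\<And>x. norm (g x) \<le> B"
  shows "set_integrable lebesgue S (\<lambda>x. g x * f x)"
proof -
  have i1: "set_integrable lebesgue S (\<lambda>x. of_real B * f x)"
    by (intro set_integrable_mult_right) (use f in blast)
  moreover have m: "set_borel_measurable lebesgue S (\<lambda>x. g x * f x)"
  proof -
    have m1[measurable]: "(\<lambda>x. indicator S x *\<^sub>R f x) \<in> borel_measurable lebesgue"
      using f by (simp add: set_integrable_def borel_measurable_integrable)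
    have "(\<lambda>x. g x * (indicator S x *\<^sub>R f x)) \<in> borel_measurable lebesgue" by measurable
    moreover have "(\<lambda>x. g x * (indicator S x *\<^sub>R f x)) = (\<lambda>x. indicator S x *\<^sub>R (g x * f x))"
      by (auto simp: fun_eq_iff indicator_def)
    ultimately show ?thesis by (simp add: set_borel_measurable_def)
  qed
  moreover have n: "norm (g x * f x) \<le> norm (of_real B * f x)" for x
  proof -
    have "norm (g x) \<le> \<bar>B\<bar>" using B[of x] by linarith
    then show ?thesis by (simp add: norm_mult mult_right_mono)
  qed
  show ?thesis
    by (rule set_integrable_bound[OF i1 m]) (rule AE_I2, use n in blast)
qed

lemma ftc_E:
  assumes "t \<le> b"
  shows "(LINT s:{t..b}|lebesgue. \<i> * of_real \<mu> * E \<mu> s) = E \<mu> b - E \<mu> t"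
proof -
  have si: "set_integrable lebesgue {t..b} (\<lambda>s. \<i> * of_real \<mu> * E \<mu> s)"
    by (rule absolutely_integrable_continuous_real) (intro continuous_intros cont_E)
  have "((\<lambda>s. \<i> * of_real \<mu> * E \<mu> s) has_integral (E \<mu> b - E \<mu> t)) {t..b}"
    by (rule fundamental_theorem_of_calculus[OF assms]) (rule E_deriv)
  then have "integral {t..b} (\<lambda>s. \<i> * of_real \<mu> * E \<mu> s) = E \<mu> b - E \<mu> t"
    by (rule integral_unique)
  show ?thesis by (rule trans[OF set_lebesgue_integral_eq_integral(2)[OF si] \<open>integral {t..b} _ = _\<close>])
qed

lemma prod_rule:
  fixes \<psi> f :: "real \<Rightarrow> complex"
  assumes ab: "a \<le> b" and f: "set_integrable lebesgue {a..b} f"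
    and rep: "\<And>s. s \<in> {a..b} \<Longrightarrow> \<psi> s = \<psi> a + (LINT t:{a..s}|lebesgue. f t)"
  shows "set_integrable lebesgue {a..b} (\<lambda>s. E \<mu> s * f s + \<i> * of_real \<mu> * E \<mu> s * \<psi> s)"
    and "E \<mu> b * \<psi> b - E \<mu> a * \<psi> a
         = (LINT s:{a..b}|lebesgue. E \<mu> s * f s + \<i> * of_real \<mu> * E \<mu> s * \<psi> s)"
proof -
  define h where "h s = \<i> * of_real \<mu> * E \<mu> s" for s
  have hm[measurable]: "h \<in> borel_measurable lebesgue" unfolding h_def by measurable
  have hB: "norm (h s) \<le> \<bar>\<mu>\<bar>" for s by (simp add: h_def norm_mult)
  note FT = fubini_tri[OF f hm hB]
  have i1: "set_integrable lebesgue {a..b} (\<lambda>s. E \<mu> s * f s)"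
    by (rule set_integrable_bdd_mult[OF f E_meas, where B=1]) simp
  have i2: "set_integrable lebesgue {a..b} (\<lambda>s. h s * \<psi> a)"
    unfolding h_def by (rule absolutely_integrable_continuous_real) (intro continuous_intros cont_E)
  have pw: "\<i> * of_real \<mu> * E \<mu> x * \<psi> x = h x * \<psi> a + h x * (LINT t:{a..x}|lebesgue. f t)"
    if "x \<in> {a..b}" for x
  proof -
    have e: "\<psi> x = \<psi> a + (LINT t:{a..x}|lebesgue. f t)" by (rule rep[OF that])
    show ?thesis unfolding h_def e by (rule distrib_left)
  qed
  have eqi: "set_integrable lebesgue {a..b} (\<lambda>s. h s * \<psi> a + h s * (LINT t:{a..s}|lebesgue. f t))"
    by (rule set_integral_add(1)[OF i2 FT(1)])
  have eqv: "(LINT s:{a..b}|lebesgue. \<i> * of_real \<mu> * E \<mu> s * \<psi> s)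
      = (LINT s:{a..b}|lebesgue. h s * \<psi> a + h s * (LINT t:{a..s}|lebesgue. f t))"
  proof (rule set_lebesgue_integral_cong)
    show "{a..b} \<in> sets lebesgue" by simp
    show "\<forall>x. x \<in> {a..b} \<longrightarrow> \<i> * of_real \<mu> * E \<mu> x * \<psi> x = h x * \<psi> a + h x * (LINT t:{a..x}|lebesgue. f t)"
      by (intro allI impI) (rule pw)
  qed
  have eq: "set_integrable lebesgue {a..b} (\<lambda>s. h s * \<psi> a + h s * (LINT t:{a..s}|lebesgue. f t))
      \<and> (LINT s:{a..b}|lebesgue. \<i> * of_real \<mu> * E \<mu> s * \<psi> s)
      = (LINT s:{a..b}|lebesgue. h s * \<psi> a + h s * (LINT t:{a..s}|lebesgue. f t))"
    by (intro conjI eqi eqv)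
  have i3: "set_integrable lebesgue {a..b} (\<lambda>s. \<i> * of_real \<mu> * E \<mu> s * \<psi> s)"
  proof -
    have "set_integrable lebesgue {a..b} (\<lambda>s. \<i> * of_real \<mu> * E \<mu> s * \<psi> s)
      = set_integrable lebesgue {a..b} (\<lambda>s. h s * \<psi> a + h s * (LINT t:{a..s}|lebesgue. f t))"
      by (rule set_integrable_cong) (simp_all only: pw)
    with eqi show ?thesis by blast
  qed
  then show "set_integrable lebesgue {a..b} (\<lambda>s. E \<mu> s * f s + \<i> * of_real \<mu> * E \<mu> s * \<psi> s)"
    using i1 by auto
  have A: "(LINT s:{a..b}|lebesgue. h s * \<psi> a) = (E \<mu> b - E \<mu> a) * \<psi> a"
    using ftc_E[OF ab] by (simp add: h_def)
  have B: "(LINT t:{a..b}|lebesgue. f t * (LINT s:{t..b}|lebesgue. h s))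
      = (LINT t:{a..b}|lebesgue. E \<mu> b * f t - E \<mu> t * f t)"
  proof (rule set_lebesgue_integral_cong)
    show "{a..b} \<in> sets lebesgue" by simp
    show "\<forall>t. t \<in> {a..b} \<longrightarrow> f t * (LINT s:{t..b}|lebesgue. h s) = E \<mu> b * f t - E \<mu> t * f t"
    proof (intro allI impI)
      fix t assume "t \<in> {a..b}"
      then have hh: "(LINT s:{t..b}|lebesgue. h s) = E \<mu> b - E \<mu> t"
        using ftc_E[of t b \<mu>] unfolding h_def by simp
      show "f t * (LINT s:{t..b}|lebesgue. h s) = E \<mu> b * f t - E \<mu> t * f t"
        unfolding hh by (simp add: algebra_simps)
    qed
  qed
  have C: "(LINT t:{a..b}|lebesgue. E \<mu> b * f t - E \<mu> t * f t)
      = E \<mu> b * (LINT t:{a..b}|lebesgue. f t) - (LINT t:{a..b}|lebesgue. E \<mu> t * f t)"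
  proof -
    have "set_integrable lebesgue {a..b} (\<lambda>t. E \<mu> b * f t)" using f by simp
    from set_integral_diff(2)[OF this i1] show ?thesis by simp
  qed
  have D: "(LINT t:{a..b}|lebesgue. f t) = \<psi> b - \<psi> a"
  proof -
    have "\<psi> b = \<psi> a + (LINT t:{a..b}|lebesgue. f t)" using rep[of b] ab by simp
    then show ?thesis by (simp only: add_diff_cancel_left')
  qed
  have ADD: "(LINT s:{a..b}|lebesgue. h s * \<psi> a + h s * (LINT t:{a..s}|lebesgue. f t))
     = (LINT s:{a..b}|lebesgue. h s * \<psi> a) + (LINT s:{a..b}|lebesgue. h s * (LINT t:{a..s}|lebesgue. f t))"
    by (rule set_integral_add(2)[OF i2 FT(1)])
  have c1: "(LINT s:{a..b}|lebesgue. \<i> * of_real \<mu> * E \<mu> s * \<psi> s)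
      = (E \<mu> b - E \<mu> a) * \<psi> a + (E \<mu> b * (\<psi> b - \<psi> a) - (LINT t:{a..b}|lebesgue. E \<mu> t * f t))"
    unfolding eqv ADD A FT(2) B C D ..
  have ADD2: "(LINT s:{a..b}|lebesgue. E \<mu> s * f s + \<i> * of_real \<mu> * E \<mu> s * \<psi> s)
     = (LINT s:{a..b}|lebesgue. E \<mu> s * f s) + (LINT s:{a..b}|lebesgue. \<i> * of_real \<mu> * E \<mu> s * \<psi> s)"
    by (rule set_integral_add(2)[OF i1 i3])
  show "E \<mu> b * \<psi> b - E \<mu> a * \<psi> a
         = (LINT s:{a..b}|lebesgue. E \<mu> s * f s + \<i> * of_real \<mu> * E \<mu> s * \<psi> s)"
    unfolding ADD2 c1 by (simp add: algebra_simps)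
qed

lemma sq_int_meas: "sq_int f \<Longrightarrow> f \<in> borel_measurable lebesgue"
  by (simp add: sq_int_def)

lemma sq_int_sq: "sq_int f \<Longrightarrow> integrable lebesgue (\<lambda>x. (cmod (f x))\<^sup>2)"
  by (simp add: sq_int_def)

lemma le_one_plus_sq: assumes "(c::real) \<ge> 0" shows "c \<le> 1 + c\<^sup>2"
proof -
  have "0 \<le> (c - 1)\<^sup>2" by simp
  moreover have "(c - 1)\<^sup>2 = c\<^sup>2 - 2 * c + 1" by (simp add: power2_eq_square algebra_simps)
  ultimately show ?thesis using \<open>c \<ge> 0\<close> by linarith
qed

lemma sq_int_loc:
  assumes f: "sq_int f" and S: "S \<in> sets lebesgue" "emeasure lebesgue S < \<infinity>"
  shows "set_integrable lebesgue S f"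
proof -
  have c: "set_integrable lebesgue S (\<lambda>x. 1::real)"
    unfolding set_integrable_def using S by (simp add: integrable_real_indicator)
  have q: "set_integrable lebesgue S (\<lambda>x. (cmod (f x))\<^sup>2)"
    unfolding set_integrable_def by (rule integrable_mult_indicator[OF S(1) sq_int_sq[OF f]])
  have F: "set_integrable lebesgue S (\<lambda>x. 1 + (cmod (f x))\<^sup>2)"
    by (rule set_integral_add(1)[OF c q])
  have fm[measurable]: "f \<in> borel_measurable lebesgue" using f by (simp add: sq_int_def)
  have m: "set_borel_measurable lebesgue S f"
    unfolding set_borel_measurable_def using S(1) by measurable
  show ?thesis
  proof (rule set_integrable_bound[OF F m], rule AE_I2, intro impI)
    fix x
    have "cmod (f x) \<le> 1 + (cmod (f x))\<^sup>2" by (rule le_one_plus_sq) simp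
    then show "norm (f x) \<le> norm (1 + (cmod (f x))\<^sup>2)" by simp
  qed
qed

lemma sq_int_Icc: "sq_int f \<Longrightarrow> set_integrable lebesgue {a..b} f"
  by (rule sq_int_loc) (auto simp: emeasure_lborel_Icc_eq)

lemma norm_add_sq_le: "(cmod (u + v))\<^sup>2 \<le> 2 * (cmod u)\<^sup>2 + 2 * (cmod v)\<^sup>2"
proof -
  have "cmod (u + v) \<le> cmod u + cmod v" by (rule norm_triangle_ineq)
  then have "(cmod (u + v))\<^sup>2 \<le> (cmod u + cmod v)\<^sup>2" by (rule power_mono) simp
  also have "\<dots> \<le> 2 * (cmod u)\<^sup>2 + 2 * (cmod v)\<^sup>2"
  proof -
    have "0 \<le> (cmod u - cmod v)\<^sup>2" by simp
    moreover have "(cmod u - cmod v)\<^sup>2 = (cmod u)\<^sup>2 + (cmod v)\<^sup>2 - 2 * cmod u * cmod v"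
      by (simp add: power2_eq_square algebra_simps)
    moreover have "(cmod u + cmod v)\<^sup>2 = (cmod u)\<^sup>2 + (cmod v)\<^sup>2 + 2 * cmod u * cmod v"
      by (simp add: power2_eq_square algebra_simps)
    ultimately show ?thesis by linarith
  qed
  finally show ?thesis .
qed

lemma sq_int_lin:
  assumes f: "sq_int f" and g: "sq_int g"
  shows "sq_int (\<lambda>x. a * f x + b * g x)"
proof -
  have [measurable]: "f \<in> borel_measurable lebesgue" "g \<in> borel_measurable lebesgue"
    using f g by (auto simp: sq_int_def)
  have I: "integrable lebesgue (\<lambda>x. 2 * ((cmod a)\<^sup>2 * (cmod (f x))\<^sup>2) + 2 * ((cmod b)\<^sup>2 * (cmod (g x))\<^sup>2))"
    using sq_int_sq[OF f] sq_int_sq[OF g] by (intro Bochner_Integration.integrable_add) simp_all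
  have "integrable lebesgue (\<lambda>x. (cmod (a * f x + b * g x))\<^sup>2)"
  proof (rule Bochner_Integration.integrable_bound[OF I], measurable, rule AE_I2)
    fix x
    have "(cmod (a * f x + b * g x))\<^sup>2 \<le> 2 * (cmod (a * f x))\<^sup>2 + 2 * (cmod (b * g x))\<^sup>2"
      by (rule norm_add_sq_le)
    also have "\<dots> = 2 * ((cmod a)\<^sup>2 * (cmod (f x))\<^sup>2) + 2 * ((cmod b)\<^sup>2 * (cmod (g x))\<^sup>2)"
      by (simp add: norm_mult power_mult_distrib)
    finally show "norm ((cmod (a * f x + b * g x))\<^sup>2) \<le> norm (2 * ((cmod a)\<^sup>2 * (cmod (f x))\<^sup>2) + 2 * ((cmod b)\<^sup>2 * (cmod (g x))\<^sup>2))"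
      by simp
  qed
  then show ?thesis unfolding sq_int_def by simp
qed

lemma sq_int_cong:
  assumes f: "sq_int f" and g: "g \<in> borel_measurable lebesgue" and ae: "AE x in lebesgue. f x = g x"
  shows "sq_int g"
proof -
  have gm[measurable]: "g \<in> borel_measurable lebesgue" by (rule g)
  have "integrable lebesgue (\<lambda>x. (cmod (g x))\<^sup>2)"
  proof (rule integrable_cong_AE_imp[OF sq_int_sq[OF f]])
    show "(\<lambda>x. (cmod (g x))\<^sup>2) \<in> borel_measurable lebesgue" by measurable
    show "AE x in lebesgue. (cmod (f x))\<^sup>2 = (cmod (g x))\<^sup>2"
      using ae by (rule eventually_mono) simp
  qed
  then show ?thesis using g by (simp add: sq_int_def)
qed

lemma sq_int_reflect:
  assumes f: "sq_int f" shows "sq_int (\<lambda>x. f (- x))"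
proof -
  have "(\<lambda>x. f (0 + (-1) *\<^sub>R x)) \<in> borel_measurable lebesgue"
    by (rule borel_measurable_affine) (use f in \<open>auto simp: sq_int_def\<close>)
  moreover have "integrable lebesgue (\<lambda>x. (cmod (f (0 + (-1) * x)))\<^sup>2)"
    by (rule lebesgue_integrable_real_affine) (use f in \<open>auto simp: sq_int_def\<close>)
  ultimately show ?thesis by (simp add: sq_int_def)
qed

lemma lint_reflect:
  fixes f :: "real \<Rightarrow> complex"
  shows "(LINT t:{x..y}|lebesgue. f t) = (LINT t:{-y..-x}|lebesgue. f (- t))"
proof -
  have "(LINT t:{x..y}|lebesgue. f t) = (\<integral>t. indicator {x..y} t *\<^sub>R f t \<partial>lebesgue)"
    by (simp add: set_lebesgue_integral_def)
  also have "\<dots> = \<bar>-1\<bar> *\<^sub>R (\<integral>t. indicator {x..y} (0 + (-1) * t) *\<^sub>R f (0 + (-1) * t) \<partial>lebesgue)"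
    by (rule lebesgue_integral_real_affine) simp
  also have "\<dots> = (\<integral>t. indicator {-y..-x} t *\<^sub>R f (- t) \<partial>lebesgue)"
    by (auto intro!: Bochner_Integration.integral_cong simp: indicator_def)
  finally show ?thesis by (simp add: set_lebesgue_integral_def)
qed

lemma lint_split:
  fixes f :: "real \<Rightarrow> 'b::euclidean_space"
  assumes f: "set_integrable lebesgue {a..b} f" and "a \<le> c" "c \<le> b"
  shows "(LINT t:{a..b}|lebesgue. f t) = (LINT t:{a..c}|lebesgue. f t) + (LINT t:{c..b}|lebesgue. f t)"
proof -
  have f1: "set_integrable lebesgue {a..c} f" and f2: "set_integrable lebesgue {c..b} f"
    using assms by (auto intro: set_integrable_subset[OF f])
  have "integral {a..c} f + integral {c..b} f = integral {a..b} f"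
    by (rule Henstock_Kurzweil_Integration.integral_combine) (use assms set_lebesgue_integral_eq_integral(1)[OF f] in auto)
  then show ?thesis
    using set_lebesgue_integral_eq_integral(2)[OF f] set_lebesgue_integral_eq_integral(2)[OF f1]
      set_lebesgue_integral_eq_integral(2)[OF f2] by simp
qed

lemma filterlim_minus_one: "filterlim (\<lambda>R::real. R - 1) at_top at_top"
proof -
  have "filterlim (\<lambda>R::real. (-1) + R) at_top at_top"
    by (rule filterlim_tendsto_add_at_top[OF tendsto_const filterlim_ident])
  then show ?thesis by simp
qed

lemma tail_Icc:
  fixes q :: "real \<Rightarrow> real"
  assumes q: "integrable lebesgue q"
  shows "((\<lambda>R. LINT t:{R-1..R}|lebesgue. q t) \<longlongrightarrow> 0) at_top"
proof -
  have si: "set_integrable lebesgue S q" if "S \<in> sets lebesgue" for S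
    unfolding set_integrable_def by (rule integrable_mult_indicator[OF that q])
  have T1: "((\<lambda>b. LINT t:{0..b}|lebesgue. q t) \<longlongrightarrow> (LINT t:{0..}|lebesgue. q t)) at_top"
    by (rule tendsto_set_lebesgue_integral_at_top) (auto intro: si)
  have T2: "((\<lambda>R. LINT t:{0..R-1}|lebesgue. q t) \<longlongrightarrow> (LINT t:{0..}|lebesgue. q t)) at_top"
    using filterlim_compose[OF T1 filterlim_minus_one] by (simp add: o_def)
  have ev: "eventually (\<lambda>R. (LINT t:{0..R}|lebesgue. q t) - (LINT t:{0..R-1}|lebesgue. q t)
      = (LINT t:{R-1..R}|lebesgue. q t)) at_top"
    using eventually_ge_at_top[of "1::real"]
  proof (rule eventually_mono)
    fix R :: real assume "1 \<le> R"
    then show "(LINT t:{0..R}|lebesgue. q t) - (LINT t:{0..R-1}|lebesgue. q t) = (LINT t:{R-1..R}|lebesgue. q t)"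
      using lint_split[OF si[of "{0..R}"], of "R - 1"] by simp
  qed
  have "((\<lambda>R. (LINT t:{0..R}|lebesgue. q t) - (LINT t:{0..R-1}|lebesgue. q t)) \<longlongrightarrow> 0) at_top"
    using tendsto_diff[OF T1 T2] by simp
  then show ?thesis by (rule Lim_transform_eventually) (rule ev)
qed

lemma amgm: assumes "(e::real) > 0" shows "c \<le> e / 2 + c\<^sup>2 / (2 * e)"
proof -
  have "0 \<le> (c - e)\<^sup>2" by simp
  then have "2 * e * c \<le> e\<^sup>2 + c\<^sup>2" by (simp add: power2_eq_square algebra_simps)
  then have "c \<le> (e\<^sup>2 + c\<^sup>2) / (2 * e)" using assms by (simp add: field_simps)
  also have "\<dots> = e / 2 + c\<^sup>2 / (2 * e)" using assms by (simp add: field_simps power2_eq_square)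
  finally show ?thesis .
qed

lemma lint_nonneg: "(\<And>x. 0 \<le> f x) \<Longrightarrow> 0 \<le> (LINT x:A|lebesgue. (f x :: real))"
  unfolding set_lebesgue_integral_def by (rule Bochner_Integration.integral_nonneg) (simp add: indicator_def)

lemma si_cmul: "set_integrable M A f \<Longrightarrow> set_integrable M A (\<lambda>t. (c::real) * f t)"
  by (rule set_integrable_mult_right) simp

lemma int_bound_unit:
  fixes h :: "real \<Rightarrow> complex"
  assumes h: "sq_int h" and e: "e > 0"
  shows "(LINT t:{R-1..R}|lebesgue. cmod (h t)) \<le> e / 2 + (LINT t:{R-1..R}|lebesgue. (cmod (h t))\<^sup>2) / (2 * e)"
proof -
  let ?I = "{R-1..R}"
  have i1: "set_integrable lebesgue ?I (\<lambda>t. cmod (h t))" by (rule set_integrable_norm[OF sq_int_Icc[OF h]])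
  have i2: "set_integrable lebesgue ?I (\<lambda>t. (cmod (h t))\<^sup>2)"
    unfolding set_integrable_def by (rule integrable_mult_indicator[OF _ sq_int_sq[OF h]]) simp
  have ic: "set_integrable lebesgue ?I (\<lambda>t. e / 2)"
    unfolding set_integrable_def by (intro integrable_scaleR_left integrable_real_indicator) (auto simp: emeasure_lborel_Icc_eq)
  have i2c: "set_integrable lebesgue ?I (\<lambda>t. 1 / (2 * e) * (cmod (h t))\<^sup>2)"
    by (rule si_cmul[OF i2])
  have i3: "set_integrable lebesgue ?I (\<lambda>t. e / 2 + 1 / (2 * e) * (cmod (h t))\<^sup>2)"
    by (rule set_integral_add(1)[OF ic i2c])
  have "(LINT t:?I|lebesgue. cmod (h t)) \<le> (LINT t:?I|lebesgue. e / 2 + 1 / (2 * e) * (cmod (h t))\<^sup>2)"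
    by (rule set_integral_mono[OF i1 i3]) (use amgm[OF e] in simp)
  also have "\<dots> = (LINT t:?I|lebesgue. e / 2) + 1 / (2 * e) * (LINT t:?I|lebesgue. (cmod (h t))\<^sup>2)"
    unfolding set_integral_add(2)[OF ic i2c] by simp
  also have "(LINT t:?I|lebesgue. e / 2) = e / 2"
    by (subst set_integral_const) (auto simp: emeasure_lborel_Icc_eq)
  finally show ?thesis by simp
qed

lemma decay:
  fixes \<psi> g :: "real \<Rightarrow> complex"
  assumes \<psi>: "sq_int \<psi>" and g: "sq_int g"
    and rel: "\<And>x y. 0 < x \<Longrightarrow> x \<le> y \<Longrightarrow> \<psi> y - \<psi> x = (LINT t:{x..y}|lebesgue. g t)"
  shows "(\<psi> \<longlongrightarrow> 0) at_top"
proof -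
  define Q where "Q R = (LINT t:{R-1..R}|lebesgue. (cmod (\<psi> t))\<^sup>2) + (LINT t:{R-1..R}|lebesgue. (cmod (g t))\<^sup>2)" for R
  have Q0: "(Q \<longlongrightarrow> 0) at_top"
    unfolding Q_def using tendsto_add[OF tail_Icc[OF sq_int_sq[OF \<psi>]] tail_Icc[OF sq_int_sq[OF g]]] by simp
  have key: "cmod (\<psi> R) \<le> \<epsilon> + Q R / (2 * \<epsilon>)" if R: "R \<ge> 2" and e: "\<epsilon> > 0" for R \<epsilon>
  proof -
    let ?I = "{R-1..R}"
    define N where "N = (LINT t:?I|lebesgue. cmod (g t))"
    have gni: "set_integrable lebesgue ?I (\<lambda>t. cmod (g t))" by (rule set_integrable_norm[OF sq_int_Icc[OF g]])
    have p2i: "set_integrable lebesgue ?I (\<lambda>t. (cmod (\<psi> t))\<^sup>2)"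
      unfolding set_integrable_def by (rule integrable_mult_indicator[OF _ sq_int_sq[OF \<psi>]]) simp
    have ic: "set_integrable lebesgue ?I (\<lambda>t. c::real)" for c
      unfolding set_integrable_def by (intro integrable_scaleR_left integrable_real_indicator) (auto simp: emeasure_lborel_Icc_eq)
    have pt: "cmod (\<psi> R) - N \<le> \<epsilon> / 2 + 1 / (2 * \<epsilon>) * (cmod (\<psi> t))\<^sup>2" if t: "t \<in> ?I" for t
    proof -
      have t0: "0 < t" "t \<le> R" using t R by auto
      have "\<psi> R = \<psi> t + (LINT s:{t..R}|lebesgue. g s)" using rel[OF t0] by (simp add: algebra_simps)
      then have "cmod (\<psi> R) \<le> cmod (\<psi> t) + cmod (LINT s:{t..R}|lebesgue. g s)"
        by (metis norm_triangle_ineq)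
      also have "cmod (LINT s:{t..R}|lebesgue. g s) \<le> (LINT s:{t..R}|lebesgue. cmod (g s))"
        by (rule set_integral_norm_bound[OF sq_int_Icc[OF g]])
      also have "(LINT s:{t..R}|lebesgue. cmod (g s)) \<le> N"
      proof -
        have "N = (LINT s:{R-1..t}|lebesgue. cmod (g s)) + (LINT s:{t..R}|lebesgue. cmod (g s))"
          unfolding N_def by (rule lint_split[OF gni]) (use t in auto)
        moreover have "0 \<le> (LINT s:{R-1..t}|lebesgue. cmod (g s))" by (rule lint_nonneg) simp
        ultimately show ?thesis by simp
      qed
      finally have "cmod (\<psi> R) - N \<le> cmod (\<psi> t)" by simp
      also have "\<dots> \<le> \<epsilon> / 2 + (cmod (\<psi> t))\<^sup>2 / (2 * \<epsilon>)" by (rule amgm[OF e])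
      finally show ?thesis by simp
    qed
    have p2c: "set_integrable lebesgue ?I (\<lambda>t. 1 / (2 * \<epsilon>) * (cmod (\<psi> t))\<^sup>2)"
      by (rule si_cmul[OF p2i])
    have "(LINT t:?I|lebesgue. cmod (\<psi> R) - N) \<le> (LINT t:?I|lebesgue. \<epsilon> / 2 + 1 / (2 * \<epsilon>) * (cmod (\<psi> t))\<^sup>2)"
      by (rule set_integral_mono[OF ic set_integral_add(1)[OF ic p2c]]) (rule pt)
    also have "\<dots> = (LINT t:?I|lebesgue. \<epsilon> / 2) + 1 / (2 * \<epsilon>) * (LINT t:?I|lebesgue. (cmod (\<psi> t))\<^sup>2)"
      unfolding set_integral_add(2)[OF ic p2c] by simp
    finally have A: "cmod (\<psi> R) - N \<le> \<epsilon> / 2 + (LINT t:?I|lebesgue. (cmod (\<psi> t))\<^sup>2) / (2 * \<epsilon>)"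
      using R by (simp add: set_integral_const emeasure_lborel_Icc_eq)
    have B: "N \<le> \<epsilon> / 2 + (LINT t:?I|lebesgue. (cmod (g t))\<^sup>2) / (2 * \<epsilon>)"
      unfolding N_def by (rule int_bound_unit[OF g e])
    from A B show ?thesis unfolding Q_def by (simp add: add_divide_distrib)
  qed
  show ?thesis
  proof (rule tendstoI)
    fix e :: real assume e: "e > 0"
    have "eventually (\<lambda>R. Q R < (e/2)\<^sup>2) at_top"
      by (rule order_tendstoD(2)[OF Q0]) (use e in simp)
    then show "eventually (\<lambda>R. dist (\<psi> R) 0 < e) at_top"
      using eventually_ge_at_top[of "2::real"]
    proof eventually_elim
      case (elim R)
      have "cmod (\<psi> R) \<le> e/2 + Q R / (2 * (e/2))" by (rule key) (use elim e in auto)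
      also have "Q R / (2 * (e/2)) < (e/2)\<^sup>2 / (2 * (e/2))"
        by (rule divide_strict_right_mono) (use elim e in auto)
      also have "(e/2)\<^sup>2 / (2 * (e/2)) = e / 4" using e by (simp add: power2_eq_square)
      finally show ?case using e by simp
    qed
  qed
qed

lemma lim_right0:
  fixes \<psi> g :: "real \<Rightarrow> complex"
  assumes g: "sq_int g"
    and rel: "\<And>x y. 0 < x \<Longrightarrow> x \<le> y \<Longrightarrow> \<psi> y - \<psi> x = (LINT t:{x..y}|lebesgue. g t)"
  shows "(\<psi> \<longlongrightarrow> \<psi> 1 - (LINT t:{0<..1}|lebesgue. g t)) (at_right 0)"
proof -
  have gi: "set_integrable lebesgue {0<..1} g"
    by (rule set_integrable_subset[OF sq_int_Icc[OF g, of 0 1]]) auto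
  have T: "((\<lambda>a. LINT t:{a..1}|lebesgue. g t) \<longlongrightarrow> (LINT t:{0<..1}|lebesgue. g t)) (at_right 0)"
    by (rule tendsto_set_lebesgue_integral_at_right) (use gi in auto)
  have T2: "((\<lambda>a. \<psi> 1 - (LINT t:{a..1}|lebesgue. g t)) \<longlongrightarrow> \<psi> 1 - (LINT t:{0<..1}|lebesgue. g t)) (at_right 0)"
    by (intro tendsto_diff tendsto_const T)
  have ev: "eventually (\<lambda>a. \<psi> 1 - (LINT t:{a..1}|lebesgue. g t) = \<psi> a) (at_right 0)"
    using eventually_at_right_real[of "0::real" 1, OF zero_less_one]
  proof (rule eventually_mono)
    fix a :: real assume "a \<in> {0<..<1}"
    then have "\<psi> 1 - \<psi> a = (LINT t:{a..1}|lebesgue. g t)" by (intro rel) auto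
    then show "\<psi> 1 - (LINT t:{a..1}|lebesgue. g t) = \<psi> a" by (simp add: algebra_simps)
  qed
  show ?thesis by (rule Lim_transform_eventually[OF T2 ev])
qed

lemma lim_left0:
  fixes \<psi> g :: "real \<Rightarrow> complex"
  assumes g: "sq_int g"
    and rel: "\<And>x y. x \<le> y \<Longrightarrow> y < 0 \<Longrightarrow> \<psi> y - \<psi> x = (LINT t:{x..y}|lebesgue. g t)"
  shows "(\<psi> \<longlongrightarrow> \<psi> (-1) + (LINT t:{-1..<0}|lebesgue. g t)) (at_left 0)"
proof -
  have gi: "set_integrable lebesgue {-1..<0} g"
    by (rule set_integrable_subset[OF sq_int_Icc[OF g, of "-1" 0]]) auto
  have T: "((\<lambda>b. LINT t:{-1..b}|lebesgue. g t) \<longlongrightarrow> (LINT t:{-1..<0}|lebesgue. g t)) (at_left 0)"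
    by (rule tendsto_set_lebesgue_integral_at_left) (use gi in auto)
  have T2: "((\<lambda>b. \<psi> (-1) + (LINT t:{-1..b}|lebesgue. g t)) \<longlongrightarrow> \<psi> (-1) + (LINT t:{-1..<0}|lebesgue. g t)) (at_left 0)"
    by (intro tendsto_add tendsto_const T)
  have ev0: "eventually (\<lambda>b. b \<in> {-1<..<0}) (at_left (0::real))"
    by (rule eventually_at_left_real) simp
  have ev: "eventually (\<lambda>b. \<psi> (-1) + (LINT t:{-1..b}|lebesgue. g t) = \<psi> b) (at_left 0)"
    using ev0
  proof (rule eventually_mono)
    fix b :: real assume "b \<in> {-1<..<0}"
    then have "\<psi> b - \<psi> (-1) = (LINT t:{-1..b}|lebesgue. g t)" by (intro rel) auto
    then show "\<psi> (-1) + (LINT t:{-1..b}|lebesgue. g t) = \<psi> b" by (simp add: algebra_simps)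
  qed
  show ?thesis by (rule Lim_transform_eventually[OF T2 ev])
qed

lemma pos_side:
  fixes \<psi> v :: "real \<Rightarrow> complex" and lam :: real and c :: complex
  assumes \<psi>: "sq_int \<psi>" and v: "sq_int v"
    and rel: "\<And>x y. 0 < x \<Longrightarrow> x \<le> y \<Longrightarrow>
       \<psi> y - \<psi> x = (LINT t:{x..y}|lebesgue. - \<i> * of_real lam * \<psi> t + \<i> * c * v t)"
    and x: "0 < x"
  shows "((\<lambda>R. \<i> * c * (LINT y:{x..R}|lebesgue. E lam y * v y)) \<longlongrightarrow> - (E lam x * \<psi> x)) at_top"
proof -
  define g where "g t = - \<i> * of_real lam * \<psi> t + \<i> * c * v t" for t
  have g: "sq_int g" unfolding g_def[abs_def] by (rule sq_int_lin[OF \<psi> v])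
  have rel': "\<psi> y - \<psi> x = (LINT t:{x..y}|lebesgue. g t)" if "0 < x" "x \<le> y" for x y
    unfolding g_def by (rule rel[OF that])
  have dec: "(\<psi> \<longlongrightarrow> 0) at_top" by (rule decay[OF \<psi> g rel'])
  have d2: "((\<lambda>R. E lam R * \<psi> R) \<longlongrightarrow> 0) at_top"
  proof (rule tendsto_norm_zero_cancel)
    have "((\<lambda>R. norm (\<psi> R)) \<longlongrightarrow> 0) at_top" by (rule tendsto_norm_zero[OF dec])
    then show "((\<lambda>R. norm (E lam R * \<psi> R)) \<longlongrightarrow> 0) at_top" by (simp add: norm_mult)
  qed
  have T: "((\<lambda>R. E lam R * \<psi> R - E lam x * \<psi> x) \<longlongrightarrow> - (E lam x * \<psi> x)) at_top"
    using tendsto_diff[OF d2 tendsto_const[of "E lam x * \<psi> x"]] by simp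
  have ev: "eventually (\<lambda>R. E lam R * \<psi> R - E lam x * \<psi> x = \<i> * c * (LINT y:{x..R}|lebesgue. E lam y * v y)) at_top"
    using eventually_ge_at_top[of x]
  proof (rule eventually_mono)
    fix R assume xR: "x \<le> R"
    have gi: "set_integrable lebesgue {x..R} g" by (rule sq_int_Icc[OF g])
    have rep: "\<psi> s = \<psi> x + (LINT t:{x..s}|lebesgue. g t)" if "s \<in> {x..R}" for s
      using rel'[of x s] that x by (simp add: algebra_simps)
    have "E lam R * \<psi> R - E lam x * \<psi> x
        = (LINT s:{x..R}|lebesgue. E lam s * g s + \<i> * of_real lam * E lam s * \<psi> s)"
      by (rule prod_rule(2)[OF xR gi rep])
    also have "\<dots> = (LINT s:{x..R}|lebesgue. (\<i> * c) * (E lam s * v s))"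
      by (rule set_lebesgue_integral_cong) (auto simp: g_def algebra_simps)
    also have "\<dots> = \<i> * c * (LINT y:{x..R}|lebesgue. E lam y * v y)"
      by (rule set_integral_mult_right)
    finally show "E lam R * \<psi> R - E lam x * \<psi> x = \<i> * c * (LINT y:{x..R}|lebesgue. E lam y * v y)" .
  qed
  show ?thesis by (rule Lim_transform_eventually[OF T ev])
qed

lemma E_reflect: "E (- lam) (- s) = E lam s"
  by (simp add: E_def)

lemma neg_side:
  fixes \<psi> v :: "real \<Rightarrow> complex" and lam :: real and c :: complex
  assumes \<psi>: "sq_int \<psi>" and v: "sq_int v"
    and rel: "\<And>x y. x \<le> y \<Longrightarrow> y < 0 \<Longrightarrow>
       \<psi> y - \<psi> x = (LINT t:{x..y}|lebesgue. - \<i> * of_real lam * \<psi> t + \<i> * c * v t)"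
    and x: "x < 0"
  shows "((\<lambda>R. \<i> * c * (LINT y:{R..x}|lebesgue. E lam y * v y)) \<longlongrightarrow> E lam x * \<psi> x) at_bot"
proof -
  define \<psi>' where "\<psi>' t = \<psi> (- t)" for t
  define v' where "v' t = v (- t)" for t
  have \<psi>': "sq_int \<psi>'" unfolding \<psi>'_def[abs_def] by (rule sq_int_reflect[OF \<psi>])
  have v': "sq_int v'" unfolding v'_def[abs_def] by (rule sq_int_reflect[OF v])
  have rel': "\<psi>' y - \<psi>' x = (LINT t:{x..y}|lebesgue. - \<i> * of_real (- lam) * \<psi>' t + \<i> * (- c) * v' t)"
    if "0 < x" "x \<le> y" for x y
  proof -
    have "\<psi>' y - \<psi>' x = - (\<psi> (- x) - \<psi> (- y))" by (simp add: \<psi>'_def)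
    also have "\<psi> (- x) - \<psi> (- y) = (LINT t:{-y..-x}|lebesgue. - \<i> * of_real lam * \<psi> t + \<i> * c * v t)"
      by (rule rel) (use that in auto)
    also have "\<dots> = (LINT t:{x..y}|lebesgue. - \<i> * of_real lam * \<psi> (- t) + \<i> * c * v (- t))"
      by (subst lint_reflect) simp
    also have "- \<dots> = (LINT t:{x..y}|lebesgue. (-1) * (- \<i> * of_real lam * \<psi> (- t) + \<i> * c * v (- t)))"
      by (subst set_integral_mult_right) simp
    also have "\<dots> = (LINT t:{x..y}|lebesgue. - \<i> * of_real (- lam) * \<psi>' t + \<i> * (- c) * v' t)"
      by (rule set_lebesgue_integral_cong) (auto simp: \<psi>'_def v'_def algebra_simps)
    finally show ?thesis .
  qed
  have P: "((\<lambda>R. \<i> * (- c) * (LINT y:{- x..R}|lebesgue. E (- lam) y * v' y)) \<longlongrightarrow> - (E (- lam) (- x) * \<psi>' (- x))) at_top"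
    by (rule pos_side[OF \<psi>' v' rel']) (use x in auto)
  have eqR: "(LINT y:{- x..R}|lebesgue. E (- lam) y * v' y) = (LINT y:{-R..x}|lebesgue. E lam y * v y)" for R
    by (subst lint_reflect) (simp add: v'_def E_reflect)
  have P2: "((\<lambda>R. - (\<i> * c * (LINT y:{-R..x}|lebesgue. E lam y * v y))) \<longlongrightarrow> - (E lam x * \<psi> x)) at_top"
    using P by (simp add: eqR \<psi>'_def E_reflect)
  then have P3: "((\<lambda>R. \<i> * c * (LINT y:{-R..x}|lebesgue. E lam y * v y)) \<longlongrightarrow> E lam x * \<psi> x) at_top"
    using tendsto_minus[OF P2] by simp
  show ?thesis
    unfolding filterlim_at_bot_mirror using P3 by simp
qed

lemma E_mult: "E lam a * E lam b = E lam (a + b)"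
  unfolding E_def exp_add[symmetric] by (simp add: algebra_simps)

lemma E_neg: "E lam (- x) * E lam x = 1"
  using E_mult[of lam "-x" x] by (simp add: E_def)

lemma E_neg2: "E lam x * E lam (- x) = 1"
  using E_neg[of lam x] by (simp add: mult.commute)

lemma kern_eq: "kern v lam x y = E lam (- x) * (E lam y * v y)"
proof -
  have "E lam (- x) * E lam y = exp (- \<i> * of_real lam * of_real (x - y))"
    unfolding E_def exp_add[symmetric] by (rule arg_cong[where f=exp]) (simp add: algebra_simps)
  then have "kern v lam x y = (E lam (- x) * E lam y) * v y" by (simp only: kern_def)
  then show ?thesis by (simp add: mult.assoc)
qed

lemma AE_ne0: "AE x in lebesgue. x \<noteq> (0::real)"
  by (rule AE_completion[OF AE_lborel_singleton])

lemma eig_basic: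
  assumes "eigenpair v \<alpha> lam \<psi> d\<psi>"
  shows "sq_int \<psi>" "sq_int d\<psi>"
    "\<And>x y. 0 < x \<Longrightarrow> x \<le> y \<Longrightarrow> \<psi> y - \<psi> x = (LINT t:{x..y}|lebesgue. d\<psi> t)"
    "\<And>x y. x \<le> y \<Longrightarrow> y < 0 \<Longrightarrow> \<psi> y - \<psi> x = (LINT t:{x..y}|lebesgue. d\<psi> t)"
    "\<i> * lim_m0 \<psi> - \<i> * exp (- \<i> * of_real \<alpha>) * lim_p0 \<psi> = l2_inner \<psi> v"
    "AE x in lebesgue. A_op v \<alpha> \<psi> d\<psi> x = of_real lam * \<psi> x"
  using assms unfolding eigenpair_def in_dom_def W21_Omega_def by auto

lemma eig_rel:
  assumes v: "sq_int v" and ep: "eigenpair v \<alpha> lam \<psi> d\<psi>"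
  defines "c \<equiv> lim_m0 \<psi> / 2 + exp (- \<i> * of_real \<alpha>) / 2 * lim_p0 \<psi>"
  shows "\<And>x y. 0 < x \<Longrightarrow> x \<le> y \<Longrightarrow>
            \<psi> y - \<psi> x = (LINT t:{x..y}|lebesgue. - \<i> * of_real lam * \<psi> t + \<i> * c * v t)"
    and "\<And>x y. x \<le> y \<Longrightarrow> y < 0 \<Longrightarrow>
            \<psi> y - \<psi> x = (LINT t:{x..y}|lebesgue. - \<i> * of_real lam * \<psi> t + \<i> * c * v t)"
proof -
  note B = eig_basic[OF ep]
  have [measurable]: "\<psi> \<in> borel_measurable lebesgue" "d\<psi> \<in> borel_measurable lebesgue"
    "v \<in> borel_measurable lebesgue"
    using B(1,2) v by (auto simp: sq_int_def)
  have AE: "AE t in lebesgue. d\<psi> t = - \<i> * of_real lam * \<psi> t + \<i> * c * v t"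
    using B(6)
  proof (rule eventually_mono)
    fix t assume "A_op v \<alpha> \<psi> d\<psi> t = of_real lam * \<psi> t"
    then have "\<i> * d\<psi> t + v t * c = of_real lam * \<psi> t"
      by (simp add: A_op_def c_def)
    then have "\<i> * (\<i> * d\<psi> t + v t * c) = \<i> * (of_real lam * \<psi> t)" by simp
    then show "d\<psi> t = - \<i> * of_real lam * \<psi> t + \<i> * c * v t"
      by (simp add: algebra_simps)
  qed
  have I: "(LINT t:{x..y}|lebesgue. d\<psi> t) = (LINT t:{x..y}|lebesgue. - \<i> * of_real lam * \<psi> t + \<i> * c * v t)" for x y
    by (rule set_lebesgue_integral_cong_AE) (use AE in \<open>auto elim: eventually_mono\<close>)
  show "\<And>x y. 0 < x \<Longrightarrow> x \<le> y \<Longrightarrow>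
            \<psi> y - \<psi> x = (LINT t:{x..y}|lebesgue. - \<i> * of_real lam * \<psi> t + \<i> * c * v t)"
    using B(3) I by simp
  show "\<And>x y. x \<le> y \<Longrightarrow> y < 0 \<Longrightarrow>
            \<psi> y - \<psi> x = (LINT t:{x..y}|lebesgue. - \<i> * of_real lam * \<psi> t + \<i> * c * v t)"
    using B(4) I by simp
qed

lemma eig_struct:
  assumes v: "sq_int v" and ep: "eigenpair v \<alpha> lam \<psi> d\<psi>"
  defines "c \<equiv> lim_m0 \<psi> / 2 + exp (- \<i> * of_real \<alpha>) / 2 * lim_p0 \<psi>"
  shows "(c = 0 \<longrightarrow> (\<forall>x. x \<noteq> 0 \<longrightarrow> \<psi> x = 0)) \<and>
         (c \<noteq> 0 \<longrightarrow> psi_lam_exists v lam \<and> (\<forall>x. x \<noteq> 0 \<longrightarrow> \<psi> x = c * psi_lam v lam x))"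
proof -
  note B = eig_basic[OF ep]
  note R = eig_rel[OF v ep, folded c_def]
  have P: "((\<lambda>R. \<i> * c * (LINT y:{x..R}|lebesgue. E lam y * v y)) \<longlongrightarrow> - (E lam x * \<psi> x)) at_top"
    if "0 < x" for x
    by (rule pos_side[OF B(1) v R(1) that])
  have N: "((\<lambda>R. \<i> * c * (LINT y:{R..x}|lebesgue. E lam y * v y)) \<longlongrightarrow> E lam x * \<psi> x) at_bot"
    if "x < 0" for x
    by (rule neg_side[OF B(1) v R(2) that])
  have case0: "\<psi> x = 0" if c0: "c = 0" and x: "x \<noteq> 0" for x
  proof (cases "x > 0")
    case True
    have "((\<lambda>R. \<i> * c * (LINT y:{x..R}|lebesgue. E lam y * v y)) \<longlongrightarrow> 0) at_top"
      using c0 by simp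
    from tendsto_unique[OF trivial_limit_at_top_linorder this P[OF True]]
    have "0 = - (E lam x * \<psi> x)" .
    then show ?thesis by simp
  next
    case False
    with x have "x < 0" by simp
    have "((\<lambda>R. \<i> * c * (LINT y:{R..x}|lebesgue. E lam y * v y)) \<longlongrightarrow> 0) at_bot"
      using c0 by simp
    from tendsto_unique[OF trivial_limit_at_bot_linorder this N[OF \<open>x < 0\<close>]]
    have "0 = E lam x * \<psi> x" .
    then show ?thesis by simp
  qed
  have KP: "((\<lambda>R. LINT y:{x..R}|lebesgue. kern v lam x y) \<longlongrightarrow> \<i> * \<psi> x / c) at_top"
    if c0: "c \<noteq> 0" and x: "0 < x" for x
  proof -
    have T: "((\<lambda>R. E lam (- x) / (\<i> * c) * (\<i> * c * (LINT y:{x..R}|lebesgue. E lam y * v y)))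
        \<longlongrightarrow> E lam (- x) / (\<i> * c) * (- (E lam x * \<psi> x))) at_top"
      by (rule tendsto_mult_left[OF P[OF x]])
    have f: "(\<lambda>R. E lam (- x) / (\<i> * c) * (\<i> * c * (LINT y:{x..R}|lebesgue. E lam y * v y)))
        = (\<lambda>R. LINT y:{x..R}|lebesgue. kern v lam x y)"
      using c0 by (simp add: kern_eq fun_eq_iff)
    have l: "E lam (- x) / (\<i> * c) * (- (E lam x * \<psi> x)) = \<i> * \<psi> x / c"
    proof -
      have "E lam (- x) / (\<i> * c) * (- (E lam x * \<psi> x)) = - (E lam (- x) * E lam x) * \<psi> x / (\<i> * c)"
        by (simp add: field_simps)
      also have "\<dots> = \<i> * \<psi> x / c" using c0 by (simp add: E_neg E_neg2 field_simps)
      finally show ?thesis .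
    qed
    from T show ?thesis unfolding f l .
  qed
  have KN: "((\<lambda>R. LINT y:{R..x}|lebesgue. kern v lam x y) \<longlongrightarrow> - \<i> * \<psi> x / c) at_bot"
    if c0: "c \<noteq> 0" and x: "x < 0" for x
  proof -
    have T: "((\<lambda>R. E lam (- x) / (\<i> * c) * (\<i> * c * (LINT y:{R..x}|lebesgue. E lam y * v y)))
        \<longlongrightarrow> E lam (- x) / (\<i> * c) * (E lam x * \<psi> x)) at_bot"
      by (rule tendsto_mult_left[OF N[OF x]])
    have f: "(\<lambda>R. E lam (- x) / (\<i> * c) * (\<i> * c * (LINT y:{R..x}|lebesgue. E lam y * v y)))
        = (\<lambda>R. LINT y:{R..x}|lebesgue. kern v lam x y)"
      using c0 by (simp add: kern_eq fun_eq_iff)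
    have l: "E lam (- x) / (\<i> * c) * (E lam x * \<psi> x) = - \<i> * \<psi> x / c"
    proof -
      have "E lam (- x) / (\<i> * c) * (E lam x * \<psi> x) = (E lam (- x) * E lam x) * \<psi> x / (\<i> * c)"
        by (simp add: field_simps)
      also have "\<dots> = - \<i> * \<psi> x / c" using c0 by (simp add: E_neg E_neg2 field_simps)
      finally show ?thesis .
    qed
    from T show ?thesis unfolding f l .
  qed
  have ex: "psi_lam_exists v lam" if c0: "c \<noteq> 0"
    unfolding psi_lam_exists_def using KP[OF c0] KN[OF c0] by blast
  have eqn: "\<psi> x = c * psi_lam v lam x" if c0: "c \<noteq> 0" and x: "x \<noteq> 0" for x
  proof (cases "x > 0")
    case True
    have "Lim at_top (\<lambda>R. LINT y:{x..R}|lebesgue. kern v lam x y) = \<i> * \<psi> x / c"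
      by (rule tendsto_Lim[OF trivial_limit_at_top_linorder KP[OF c0 True]])
    then have "psi_lam v lam x = - \<i> * (\<i> * \<psi> x / c)" using True by (simp add: psi_lam_def)
    then show ?thesis using c0 by (simp add: field_simps)
  next
    case False
    with x have x': "x < 0" by simp
    have "Lim at_bot (\<lambda>R. LINT y:{R..x}|lebesgue. kern v lam x y) = - \<i> * \<psi> x / c"
      by (rule tendsto_Lim[OF trivial_limit_at_bot_linorder KN[OF c0 x']])
    then have "psi_lam v lam x = \<i> * (- \<i> * \<psi> x / c)" using x' by (simp add: psi_lam_def)
    then show ?thesis using c0 by (simp add: field_simps)
  qed
  show ?thesis using case0 ex eqn by blast
qed

lemma E_flip: "E lam (- s) = E (- lam) s"
  by (simp add: E_def)

lemma fv_int: "sq_int v \<Longrightarrow> set_integrable lebesgue {a..b} (\<lambda>s. E lam s * v s)"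
  by (rule set_integrable_bdd_mult[OF sq_int_Icc E_meas, where B=1]) simp_all

lemma set_integrable_neg: "set_integrable M A f \<Longrightarrow> set_integrable M A (\<lambda>s. - (f s :: complex))"
proof -
  assume f: "set_integrable M A f"
  have "set_integrable M A (\<lambda>s. (-1) * f s)" by (rule set_integrable_mult_right) (use f in simp)
  then show ?thesis by simp
qed

lemma rep_pos:
  assumes v: "sq_int v" and ex: "psi_lam_exists v lam" and x: "0 < x" and xy: "x \<le> y"
  shows "psi_lam v lam y - psi_lam v lam x
     = (LINT t:{x..y}|lebesgue. - \<i> * of_real lam * psi_lam v lam t + \<i> * v t)"
proof -
  define I where "I x R = (LINT y:{x..R}|lebesgue. E lam y * v y)" for x R
  define H where "H x = Lim at_top (I x)" for x
  have kI: "(LINT y:{x..R}|lebesgue. kern v lam x y) = E lam (- x) * I x R" for x R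
    by (simp add: kern_eq I_def)
  have HT: "(I x \<longlongrightarrow> H x) at_top" and PL: "psi_lam v lam x = - \<i> * (E lam (- x) * H x)" if x: "0 < x" for x
  proof -
    from ex x obtain l where l: "((\<lambda>R. LINT y:{x..R}|lebesgue. kern v lam x y) \<longlongrightarrow> l) at_top"
      unfolding psi_lam_exists_def by blast
    have "((\<lambda>R. E lam x * (LINT y:{x..R}|lebesgue. kern v lam x y)) \<longlongrightarrow> E lam x * l) at_top"
      by (rule tendsto_mult_left[OF l])
    moreover have "(\<lambda>R. E lam x * (LINT y:{x..R}|lebesgue. kern v lam x y)) = I x"
      by (simp add: kI fun_eq_iff mult.assoc[symmetric] E_neg2)
    ultimately have T: "(I x \<longlongrightarrow> E lam x * l) at_top" by simp
    then show HT: "(I x \<longlongrightarrow> H x) at_top"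
      unfolding H_def using tendsto_Lim[OF trivial_limit_at_top_linorder T] by simp
    have "((\<lambda>R. LINT y:{x..R}|lebesgue. kern v lam x y) \<longlongrightarrow> E lam (- x) * H x) at_top"
      unfolding kI by (rule tendsto_mult_left[OF HT])
    then have "Lim at_top (\<lambda>R. LINT y:{x..R}|lebesgue. kern v lam x y) = E lam (- x) * H x"
      by (rule tendsto_Lim[OF trivial_limit_at_top_linorder])
    then show "psi_lam v lam x = - \<i> * (E lam (- x) * H x)"
      using x by (simp add: psi_lam_def)
  qed
  have Hdiff: "H a = (LINT t:{a..b}|lebesgue. E lam t * v t) + H b" if ab: "0 < a" "a \<le> b" for a b
  proof -
    have T1: "((\<lambda>R. (LINT t:{a..b}|lebesgue. E lam t * v t) + I b R) \<longlongrightarrow> (LINT t:{a..b}|lebesgue. E lam t * v t) + H b) at_top"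
      by (intro tendsto_add tendsto_const HT) (use ab in auto)
    have ev: "eventually (\<lambda>R. (LINT t:{a..b}|lebesgue. E lam t * v t) + I b R = I a R) at_top"
      using eventually_ge_at_top[of b]
    proof (rule eventually_mono)
      fix R assume "b \<le> R"
      then show "(LINT t:{a..b}|lebesgue. E lam t * v t) + I b R = I a R"
        unfolding I_def using lint_split[OF fv_int[OF v, of a R lam], of b] ab by simp
    qed
    have "(I a \<longlongrightarrow> (LINT t:{a..b}|lebesgue. E lam t * v t) + H b) at_top"
      by (rule Lim_transform_eventually[OF T1 ev])
    from tendsto_unique[OF trivial_limit_at_top_linorder HT[OF ab(1)] this] show ?thesis .
  qed
  have fi: "set_integrable lebesgue {x..y} (\<lambda>s. - (E lam s * v s))"
    by (rule set_integrable_neg[OF fv_int[OF v]])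
  have rep: "H s = H x + (LINT t:{x..s}|lebesgue. - (E lam t * v t))" if s: "s \<in> {x..y}" for s
  proof -
    have "H x = (LINT t:{x..s}|lebesgue. E lam t * v t) + H s" by (rule Hdiff) (use x s in auto)
    moreover have "(LINT t:{x..s}|lebesgue. - (E lam t * v t)) = - (LINT t:{x..s}|lebesgue. E lam t * v t)"
      by (rule set_integral_uminus[OF fv_int[OF v]])
    ultimately show ?thesis by simp
  qed
  have PR: "E (- lam) y * H y - E (- lam) x * H x
     = (LINT s:{x..y}|lebesgue. E (- lam) s * - (E lam s * v s) + \<i> * of_real (- lam) * E (- lam) s * H s)"
    by (rule prod_rule(2)[OF xy fi rep])
  have "psi_lam v lam y - psi_lam v lam x = - \<i> * (E (- lam) y * H y - E (- lam) x * H x)"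
    using PL[of x] PL[of y] x xy by (simp add: E_flip algebra_simps)
  also have "\<dots> = (LINT s:{x..y}|lebesgue. - \<i> * (E (- lam) s * - (E lam s * v s) + \<i> * of_real (- lam) * E (- lam) s * H s))"
    unfolding PR by (rule set_integral_mult_right[symmetric])
  also have "\<dots> = (LINT t:{x..y}|lebesgue. - \<i> * of_real lam * psi_lam v lam t + \<i> * v t)"
  proof (rule set_lebesgue_integral_cong)
    show "{x..y} \<in> sets lebesgue" by simp
    show "\<forall>t. t \<in> {x..y} \<longrightarrow> - \<i> * (E (- lam) t * - (E lam t * v t) + \<i> * of_real (- lam) * E (- lam) t * H t)
        = - \<i> * of_real lam * psi_lam v lam t + \<i> * v t"
    proof (intro allI impI)
      fix t assume t: "t \<in> {x..y}"
      then have "psi_lam v lam t = - \<i> * (E (- lam) t * H t)" using PL[of t] x by (simp add: E_flip)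
      moreover have "E (- lam) t * E lam t = 1" using E_neg[of lam t] by (simp add: E_flip)
      ultimately show "- \<i> * (E (- lam) t * - (E lam t * v t) + \<i> * of_real (- lam) * E (- lam) t * H t)
        = - \<i> * of_real lam * psi_lam v lam t + \<i> * v t"
        by (simp add: algebra_simps)
    qed
  qed
  finally show ?thesis .
qed

lemma rep_neg:
  assumes v: "sq_int v" and ex: "psi_lam_exists v lam" and xy: "x \<le> y" and y: "y < 0"
  shows "psi_lam v lam y - psi_lam v lam x
     = (LINT t:{x..y}|lebesgue. - \<i> * of_real lam * psi_lam v lam t + \<i> * v t)"
proof -
  define J where "J x R = (LINT y:{R..x}|lebesgue. E lam y * v y)" for x R
  define K where "K x = Lim at_bot (J x)" for x
  have kJ: "(LINT y:{R..x}|lebesgue. kern v lam x y) = E lam (- x) * J x R" for x R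
    by (simp add: kern_eq J_def)
  have KT: "(J x \<longlongrightarrow> K x) at_bot" and PL: "psi_lam v lam x = \<i> * (E lam (- x) * K x)" if x: "x < 0" for x
  proof -
    from ex x obtain l where l: "((\<lambda>R. LINT y:{R..x}|lebesgue. kern v lam x y) \<longlongrightarrow> l) at_bot"
      unfolding psi_lam_exists_def by blast
    have "((\<lambda>R. E lam x * (LINT y:{R..x}|lebesgue. kern v lam x y)) \<longlongrightarrow> E lam x * l) at_bot"
      by (rule tendsto_mult_left[OF l])
    moreover have "(\<lambda>R. E lam x * (LINT y:{R..x}|lebesgue. kern v lam x y)) = J x"
      by (simp add: kJ fun_eq_iff mult.assoc[symmetric] E_neg2)
    ultimately have T: "(J x \<longlongrightarrow> E lam x * l) at_bot" by simp
    then show KT: "(J x \<longlongrightarrow> K x) at_bot"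
      unfolding K_def using tendsto_Lim[OF trivial_limit_at_bot_linorder T] by simp
    have "((\<lambda>R. LINT y:{R..x}|lebesgue. kern v lam x y) \<longlongrightarrow> E lam (- x) * K x) at_bot"
      unfolding kJ by (rule tendsto_mult_left[OF KT])
    then have "Lim at_bot (\<lambda>R. LINT y:{R..x}|lebesgue. kern v lam x y) = E lam (- x) * K x"
      by (rule tendsto_Lim[OF trivial_limit_at_bot_linorder])
    then show "psi_lam v lam x = \<i> * (E lam (- x) * K x)"
      using x by (simp add: psi_lam_def)
  qed
  have Kdiff: "K b = K a + (LINT t:{a..b}|lebesgue. E lam t * v t)" if ab: "a \<le> b" "b < 0" for a b
  proof -
    have T1: "((\<lambda>R. J a R + (LINT t:{a..b}|lebesgue. E lam t * v t)) \<longlongrightarrow> K a + (LINT t:{a..b}|lebesgue. E lam t * v t)) at_bot"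
      by (intro tendsto_add tendsto_const KT) (use ab in auto)
    have ev: "eventually (\<lambda>R. J a R + (LINT t:{a..b}|lebesgue. E lam t * v t) = J b R) at_bot"
      using eventually_le_at_bot[of a]
    proof (rule eventually_mono)
      fix R assume "R \<le> a"
      then show "J a R + (LINT t:{a..b}|lebesgue. E lam t * v t) = J b R"
        unfolding J_def using lint_split[OF fv_int[OF v, of R b lam], of a] ab by simp
    qed
    have "(J b \<longlongrightarrow> K a + (LINT t:{a..b}|lebesgue. E lam t * v t)) at_bot"
      by (rule Lim_transform_eventually[OF T1 ev])
    from tendsto_unique[OF trivial_limit_at_bot_linorder KT[OF ab(2)] this] show ?thesis .
  qed
  have fi: "set_integrable lebesgue {x..y} (\<lambda>s. E lam s * v s)"
    by (rule fv_int[OF v])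
  have rep: "K s = K x + (LINT t:{x..s}|lebesgue. E lam t * v t)" if s: "s \<in> {x..y}" for s
    by (rule Kdiff) (use y s in auto)
  have PR: "E (- lam) y * K y - E (- lam) x * K x
     = (LINT s:{x..y}|lebesgue. E (- lam) s * (E lam s * v s) + \<i> * of_real (- lam) * E (- lam) s * K s)"
    by (rule prod_rule(2)[OF xy fi rep])
  have "psi_lam v lam y - psi_lam v lam x = \<i> * (E (- lam) y * K y - E (- lam) x * K x)"
    using PL[of x] PL[of y] y xy by (simp add: E_flip algebra_simps)
  also have "\<dots> = (LINT s:{x..y}|lebesgue. \<i> * (E (- lam) s * (E lam s * v s) + \<i> * of_real (- lam) * E (- lam) s * K s))"
    unfolding PR by (rule set_integral_mult_right[symmetric])
  also have "\<dots> = (LINT t:{x..y}|lebesgue. - \<i> * of_real lam * psi_lam v lam t + \<i> * v t)"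
  proof (rule set_lebesgue_integral_cong)
    show "{x..y} \<in> sets lebesgue" by simp
    show "\<forall>t. t \<in> {x..y} \<longrightarrow> \<i> * (E (- lam) t * (E lam t * v t) + \<i> * of_real (- lam) * E (- lam) t * K t)
        = - \<i> * of_real lam * psi_lam v lam t + \<i> * v t"
    proof (intro allI impI)
      fix t assume t: "t \<in> {x..y}"
      then have "psi_lam v lam t = \<i> * (E (- lam) t * K t)" using PL[of t] y by (simp add: E_flip)
      moreover have "E (- lam) t * E lam t = 1" using E_neg[of lam t] by (simp add: E_flip)
      ultimately show "\<i> * (E (- lam) t * (E lam t * v t) + \<i> * of_real (- lam) * E (- lam) t * K t)
        = - \<i> * of_real lam * psi_lam v lam t + \<i> * v t"
        by (simp add: algebra_simps)
    qed
  qed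
  finally show ?thesis .
qed

lemma cond_eigenpair:
  assumes v: "sq_int v" and pc: "psi_cond v \<alpha> lam"
  shows "eigenpair v \<alpha> lam (psi_lam v lam) (\<lambda>x. - \<i> * of_real lam * psi_lam v lam x + \<i> * v x)"
proof -
  let ?p = "psi_lam v lam"
  let ?e = "exp (- \<i> * of_real \<alpha>)"
  have ex: "psi_lam_exists v lam" and sp: "sq_int ?p"
    and c1: "lim_m0 ?p + ?e * lim_p0 ?p = 2"
    and c2: "lim_m0 ?p - ?e * lim_p0 ?p = - \<i> * l2_inner ?p v"
    using pc unfolding psi_cond_def by auto
  have sd: "sq_int (\<lambda>x. - \<i> * of_real lam * ?p x + \<i> * v x)"
    by (rule sq_int_lin[OF sp v])
  have W: "W21_Omega ?p (\<lambda>x. - \<i> * of_real lam * ?p x + \<i> * v x)"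
    unfolding W21_Omega_def using sp sd rep_pos[OF v ex] rep_neg[OF v ex] by blast
  have D: "\<i> * lim_m0 ?p - \<i> * ?e * lim_p0 ?p = l2_inner ?p v"
  proof -
    have "\<i> * lim_m0 ?p - \<i> * ?e * lim_p0 ?p = \<i> * (lim_m0 ?p - ?e * lim_p0 ?p)"
      by (simp add: algebra_simps)
    also have "\<dots> = l2_inner ?p v" unfolding c2 by simp
    finally show ?thesis .
  qed
  have h: "lim_m0 ?p / 2 + ?e / 2 * lim_p0 ?p = 1" using c1 by (simp add: field_simps)
  have A: "A_op v \<alpha> ?p (\<lambda>x. - \<i> * of_real lam * ?p x + \<i> * v x) x = of_real lam * ?p x" for x
    unfolding A_op_def h by (simp add: algebra_simps)
  show ?thesis unfolding eigenpair_def in_dom_def using W D A by simp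
qed

lemma lim_zero_right:
  fixes f :: "real \<Rightarrow> complex"
  assumes T: "(f \<longlongrightarrow> L) (at_right 0)" and ae: "AE x in lebesgue. f x = 0"
  shows "L = 0"
proof (rule ccontr)
  assume L: "L \<noteq> 0"
  have "eventually (\<lambda>x. f x \<noteq> 0) (at_right 0)" by (rule tendsto_imp_eventually_ne[OF T L])
  then obtain b where b: "b > 0" and bb: "\<And>y. y > 0 \<Longrightarrow> y < b \<Longrightarrow> f y \<noteq> 0"
    using eventually_at_right[of "0::real" 1] by auto
  have "AE x in lebesgue. x \<notin> {0<..<b}"
    using ae by (rule eventually_mono) (use bb in auto)
  then have "emeasure lebesgue {0<..<b} = 0"
    by (subst (asm) AE_iff_measurable[of "{0<..<b}"]) auto
  with b show False by simp
qed

lemma lim_zero_left: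
  fixes f :: "real \<Rightarrow> complex"
  assumes T: "(f \<longlongrightarrow> L) (at_left 0)" and ae: "AE x in lebesgue. f x = 0"
  shows "L = 0"
proof (rule ccontr)
  assume L: "L \<noteq> 0"
  have "eventually (\<lambda>x. f x \<noteq> 0) (at_left 0)" by (rule tendsto_imp_eventually_ne[OF T L])
  then obtain b where b: "b < 0" and bb: "\<And>y. y > b \<Longrightarrow> y < 0 \<Longrightarrow> f y \<noteq> 0"
    using eventually_at_left[of "-1::real" 0] by auto
  have "AE x in lebesgue. x \<notin> {b<..<0}"
    using ae by (rule eventually_mono) (use bb in auto)
  then have "emeasure lebesgue {b<..<0} = 0"
    by (subst (asm) AE_iff_measurable[of "{b<..<0}"]) auto
  with b show False by simp
qed

lemma eig_lims:
  assumes ep: "eigenpair v \<alpha> lam \<psi> d\<psi>"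
  shows "(\<psi> \<longlongrightarrow> lim_m0 \<psi>) (at_left 0)" "(\<psi> \<longlongrightarrow> lim_p0 \<psi>) (at_right 0)"
proof -
  note B = eig_basic[OF ep]
  have L: "(\<psi> \<longlongrightarrow> \<psi> (-1) + (LINT t:{-1..<0}|lebesgue. d\<psi> t)) (at_left 0)"
    by (rule lim_left0[OF B(2) B(4)])
  then show "(\<psi> \<longlongrightarrow> lim_m0 \<psi>) (at_left 0)"
    unfolding lim_m0_def using tendsto_Lim[OF trivial_limit_at_left_real L] by simp
  have R: "(\<psi> \<longlongrightarrow> \<psi> 1 - (LINT t:{0<..1}|lebesgue. d\<psi> t)) (at_right 0)"
    by (rule lim_right0[OF B(2) B(3)])
  then show "(\<psi> \<longlongrightarrow> lim_p0 \<psi>) (at_right 0)"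
    unfolding lim_p0_def using tendsto_Lim[OF trivial_limit_at_right_real R] by simp
qed

lemma eig_nonzero_c:
  assumes v: "sq_int v" and ep: "eigenpair v \<alpha> lam \<psi> d\<psi>" and nz: "\<not> (AE x in lebesgue. \<psi> x = 0)"
  shows "lim_m0 \<psi> / 2 + exp (- \<i> * of_real \<alpha>) / 2 * lim_p0 \<psi> \<noteq> 0"
proof
  assume c0: "lim_m0 \<psi> / 2 + exp (- \<i> * of_real \<alpha>) / 2 * lim_p0 \<psi> = 0"
  then have "\<forall>x. x \<noteq> 0 \<longrightarrow> \<psi> x = 0" using eig_struct[OF v ep] by simp
  then have "AE x in lebesgue. \<psi> x = 0" using AE_ne0 by (auto elim: eventually_mono)
  with nz show False by simp
qed

lemma eig_to_cond:
  assumes v: "sq_int v" and ep: "eigenpair v \<alpha> lam \<psi> d\<psi>" and nz: "\<not> (AE x in lebesgue. \<psi> x = 0)"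
  shows "psi_cond v \<alpha> lam"
proof -
  let ?p = "psi_lam v lam"
  let ?e = "exp (- \<i> * of_real \<alpha>)"
  define c where "c = lim_m0 \<psi> / 2 + ?e / 2 * lim_p0 \<psi>"
  have c0: "c \<noteq> 0" unfolding c_def by (rule eig_nonzero_c[OF v ep nz])
  have ex: "psi_lam_exists v lam" and eq: "\<And>x. x \<noteq> 0 \<Longrightarrow> \<psi> x = c * ?p x"
    using eig_struct[OF v ep] c0 unfolding c_def by auto
  note B = eig_basic[OF ep]
  have pl: "?p = (\<lambda>x. if x = 0 then 0 else \<psi> x / c)"
  proof
    fix x show "?p x = (if x = 0 then 0 else \<psi> x / c)"
      using eq[of x] c0 by (cases "x = 0") (auto simp: psi_lam_def)
  qed
  have [measurable]: "\<psi> \<in> borel_measurable lebesgue" "v \<in> borel_measurable lebesgue"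
    using B(1) v by (auto simp: sq_int_def)
  have pm[measurable]: "?p \<in> borel_measurable lebesgue"
  proof -
    have "(\<lambda>x. if x \<in> {0} then 0 else \<psi> x / c) \<in> borel_measurable lebesgue"
      by (rule measurable_If_set) auto
    then show ?thesis unfolding pl by simp
  qed
  have sp: "sq_int ?p"
  proof (rule sq_int_cong[OF _ pm])
    show "sq_int (\<lambda>x. (1 / c) * \<psi> x + 0 * \<psi> x)" by (rule sq_int_lin[OF B(1) B(1)])
    show "AE x in lebesgue. (1 / c) * \<psi> x + 0 * \<psi> x = ?p x"
      using AE_ne0 by (rule eventually_mono) (simp add: pl)
  qed
  have evl: "eventually (\<lambda>x. \<psi> x / c = ?p x) (at_left 0)"
  proof -
    have "eventually (\<lambda>x. x \<in> {-1<..<0}) (at_left (0::real))" by (rule eventually_at_left_real) simp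
    then show ?thesis by (rule eventually_mono) (simp add: pl)
  qed
  have evr: "eventually (\<lambda>x. \<psi> x / c = ?p x) (at_right 0)"
  proof -
    have "eventually (\<lambda>x. x \<in> {0<..<1}) (at_right (0::real))" by (rule eventually_at_right_real) simp
    then show ?thesis by (rule eventually_mono) (simp add: pl)
  qed
  have Tl: "(?p \<longlongrightarrow> lim_m0 \<psi> / c) (at_left 0)"
    by (rule Lim_transform_eventually[OF tendsto_divide[OF eig_lims(1)[OF ep] tendsto_const c0] evl])
  have Tr: "(?p \<longlongrightarrow> lim_p0 \<psi> / c) (at_right 0)"
    by (rule Lim_transform_eventually[OF tendsto_divide[OF eig_lims(2)[OF ep] tendsto_const c0] evr])
  have lm: "lim_m0 ?p = lim_m0 \<psi> / c"
    using tendsto_Lim[OF trivial_limit_at_left_real Tl] by (simp add: lim_m0_def)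
  have lp: "lim_p0 ?p = lim_p0 \<psi> / c"
    using tendsto_Lim[OF trivial_limit_at_right_real Tr] by (simp add: lim_p0_def)
  have cv[measurable]: "(\<lambda>x. cnj (v x)) \<in> borel_measurable lebesgue"
  proof -
    have "cnj \<in> borel_measurable borel"
      by (rule borel_measurable_continuous_onI) (intro continuous_intros)
    from measurable_compose[OF _ this, of v lebesgue] show ?thesis using v by (simp add: sq_int_def)
  qed
  have inner: "l2_inner \<psi> v = c * l2_inner ?p v"
  proof -
    have "l2_inner \<psi> v = (LINT x|lebesgue. c * (?p x * cnj (v x)))"
      unfolding l2_inner_def
    proof (rule integral_cong_AE)
      show "(\<lambda>x. \<psi> x * cnj (v x)) \<in> borel_measurable lebesgue" by measurable
      show "(\<lambda>x. c * (?p x * cnj (v x))) \<in> borel_measurable lebesgue" by measurable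
      show "AE x in lebesgue. \<psi> x * cnj (v x) = c * (?p x * cnj (v x))"
        using AE_ne0 by (rule eventually_mono) (simp add: eq)
    qed
    also have "\<dots> = c * l2_inner ?p v" unfolding l2_inner_def by (rule integral_mult_right_zero)
    finally show ?thesis .
  qed
  have cond1: "lim_m0 ?p + ?e * lim_p0 ?p = 2"
  proof -
    have s2: "lim_m0 \<psi> + ?e * lim_p0 \<psi> = 2 * c" by (simp add: c_def field_simps)
    have "lim_m0 \<psi> / c + ?e * (lim_p0 \<psi> / c) = (lim_m0 \<psi> + ?e * lim_p0 \<psi>) / c"
      by (simp add: add_divide_distrib)
    also have "\<dots> = 2" unfolding s2 using c0 by simp
    finally show ?thesis unfolding lm lp .
  qed
  have cond2: "lim_m0 ?p - ?e * lim_p0 ?p = - \<i> * l2_inner ?p v"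
  proof -
    have "\<i> * lim_m0 \<psi> - \<i> * ?e * lim_p0 \<psi> = c * l2_inner ?p v" using B(5) inner by simp
    then have H2: "c * l2_inner ?p v = \<i> * (lim_m0 \<psi> - ?e * lim_p0 \<psi>)"
      by (simp add: algebra_simps)
    have L: "l2_inner ?p v = \<i> * (lim_m0 \<psi> - ?e * lim_p0 \<psi>) / c"
      using H2 c0 by (simp add: eq_divide_eq mult.commute)
    have "- \<i> * l2_inner ?p v = (lim_m0 \<psi> - ?e * lim_p0 \<psi>) / c"
      unfolding L by (simp add: mult.assoc[symmetric])
    also have "\<dots> = lim_m0 \<psi> / c - ?e * (lim_p0 \<psi> / c)"
      by (simp add: diff_divide_distrib)
    finally show ?thesis unfolding lm lp by simp
  qed
  show ?thesis unfolding psi_cond_def using ex sp cond1 cond2 by blast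
qed

lemma cond_to_eig:
  assumes v: "sq_int v" and pc: "psi_cond v \<alpha> lam"
  shows "is_eigenvalue v \<alpha> lam"
proof -
  let ?p = "psi_lam v lam"
  let ?d = "\<lambda>x. - \<i> * of_real lam * psi_lam v lam x + \<i> * v x"
  have ep: "eigenpair v \<alpha> lam ?p ?d" by (rule cond_eigenpair[OF v pc])
  have "\<not> (AE x in lebesgue. ?p x = 0)"
  proof
    assume ae: "AE x in lebesgue. ?p x = 0"
    have "lim_m0 ?p = 0" by (rule lim_zero_left[OF eig_lims(1)[OF ep] ae])
    moreover have "lim_p0 ?p = 0" by (rule lim_zero_right[OF eig_lims(2)[OF ep] ae])
    moreover have "lim_m0 ?p + exp (- \<i> * of_real \<alpha>) * lim_p0 ?p = 2"
      using pc unfolding psi_cond_def by auto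
    ultimately show False by simp
  qed
  with ep show ?thesis unfolding is_eigenvalue_def by blast
qed

lemma eig_mult:
  assumes v: "sq_int v" and ep1: "eigenpair v \<alpha> lam \<psi>1 d\<psi>1" and nz: "\<not> (AE x in lebesgue. \<psi>1 x = 0)"
    and ep2: "eigenpair v \<alpha> lam \<psi>2 d\<psi>2"
  shows "\<exists>c. AE x in lebesgue. \<psi>2 x = c * \<psi>1 x"
proof -
  define c1 where "c1 = lim_m0 \<psi>1 / 2 + exp (- \<i> * of_real \<alpha>) / 2 * lim_p0 \<psi>1"
  define c2 where "c2 = lim_m0 \<psi>2 / 2 + exp (- \<i> * of_real \<alpha>) / 2 * lim_p0 \<psi>2"
  have c1nz: "c1 \<noteq> 0" unfolding c1_def by (rule eig_nonzero_c[OF v ep1 nz])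
  have e1: "\<And>x. x \<noteq> 0 \<Longrightarrow> \<psi>1 x = c1 * psi_lam v lam x"
    using eig_struct[OF v ep1] c1nz unfolding c1_def by auto
  have e2: "\<psi>2 x = c2 * psi_lam v lam x" if "x \<noteq> 0" for x
    using eig_struct[OF v ep2] that unfolding c2_def[symmetric] by (cases "c2 = 0") auto
  have "AE x in lebesgue. \<psi>2 x = (c2 / c1) * \<psi>1 x"
    using AE_ne0 by (rule eventually_mono) (use e1 e2 c1nz in simp)
  then show ?thesis by blast
qed

theorem theorem4p1:
  fixes v :: "real \<Rightarrow> complex" and \<alpha> lam :: real
  assumes "sq_int v"
  shows "(is_eigenvalue v \<alpha> lam \<longleftrightarrow> psi_cond v \<alpha> lam)
    \<and> (psi_cond v \<alpha> lam \<longrightarrow> (\<exists>dpsi. eigenpair v \<alpha> lam (psi_lam v lam) dpsi))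
    \<and> (is_eigenvalue v \<alpha> lam \<longrightarrow>
           (\<forall>psi1 dpsi1 psi2 dpsi2.
              eigenpair v \<alpha> lam psi1 dpsi1 \<and> \<not> (AE x in lebesgue. psi1 x = 0) \<and>
              eigenpair v \<alpha> lam psi2 dpsi2 \<longrightarrow>
              (\<exists>c. AE x in lebesgue. psi2 x = c * psi1 x)))"
proof (intro conjI impI allI)
  show "is_eigenvalue v \<alpha> lam = psi_cond v \<alpha> lam"
  proof
    assume "is_eigenvalue v \<alpha> lam"
    then obtain \<psi> d\<psi> where "eigenpair v \<alpha> lam \<psi> d\<psi>" "\<not> (AE x in lebesgue. \<psi> x = 0)"
      unfolding is_eigenvalue_def by blast
    then show "psi_cond v \<alpha> lam" by (rule eig_to_cond[OF assms])
  next
    assume "psi_cond v \<alpha> lam"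
    then show "is_eigenvalue v \<alpha> lam" by (rule cond_to_eig[OF assms])
  qed
next
  assume "psi_cond v \<alpha> lam"
  then show "\<exists>dpsi. eigenpair v \<alpha> lam (psi_lam v lam) dpsi"
    using cond_eigenpair[OF assms] by blast
next
  fix psi1 dpsi1 psi2 dpsi2
  assume "eigenpair v \<alpha> lam psi1 dpsi1 \<and> \<not> (AE x in lebesgue. psi1 x = 0) \<and> eigenpair v \<alpha> lam psi2 dpsi2"
  then show "\<exists>c. AE x in lebesgue. psi2 x = c * psi1 x"
    using eig_mult[OF assms] by blast
qed

end
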